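(* Let $n\ge2$, $f\in C^n(\mathbb{R})$, $2\le\kappa\le n$, $\alpha=(\alpha_0,\dots,\alpha_\kappa)\in\mathbb{N}_{\ge0}^{\kappa+1}$ with $|\alpha|\le n+1$, and $(\lambda_0,\dots,\lambda_\kappa)\in\mathbb{R}^{\kappa+1}$ such that for some $i\ne j$ we have $\lambda_i\ne\lambda_j$ and $\alpha_i,\alpha_j>0$. Then for every $k\in\{0,\dots,\kappa\}\setminus\{i,j\}$, \begin{align*} f[\lambda_i^{(\alpha_i)},\lambda_k^{(\alpha_k)},\lambda_j^{(\alpha_j)},\widetilde\lambda^{(\widetilde\alpha)}] =&\sum_{l=0}^{\alpha_i-1}p_{\alpha_j,l}\Big(\frac{\lambda_i-\lambda_k}{\lambda_i-\lambda_j}\Big) f[\lambda_i^{(\alpha_i-l)},\lambda_k^{(\alpha_k+\alpha_j+l)},\widetilde\lambda^{(\widetilde\alpha)}]\\ &+\sum_{l=0}^{\alpha_j-1}p_{\alpha_i,l}\Big(\frac{\lambda_k-\lambda_j}{\lambda_i-\lambda_j}\Big) f[\lambda_k^{(\alpha_k+\alpha_i+l)},\lambda_j^{(\alpha_j-l)},\widetilde\lambda^{(\widetilde\alpha)}], \end{align*} where $\widetilde\lambda^{(\widetilde\alpha)}$ denotes the list of the remaining variables $\lambda_m^{(\alpha_m)}$, $m\in\{0,\dots,\kappa\}\setminus\{i,j,k\}$, and $p_{a,l}(x)=\binom{a+l-1}{l}x^{a}(1-x)^{l}$.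
   Context: Divided differences: for $f\in C^n(\mathbb{R})$ set $f^{[0]}=f$ and for $1\le k\le n$, $f^{[k]}(\lambda_0,\lambda_1,\lambda)=\frac{f^{[k-1]}(\lambda_0,\lambda)-f^{[k-1]}(\lambda_1,\lambda)}{\lambda_0-\lambda_1}$ if $\lambda_0\ne\lambda_1$, and $=\frac{d}{d\mu}f^{[k-1]}(\mu,\lambda)|_{\mu=\lambda_0}$ if $\lambda_0=\lambda_1$; these are symmetric in their arguments. Notation: for reals $\mu_0,\dots,\mu_m$ and nonnegative integers $\beta_0,\dots,\beta_m$ with $N=\sum\beta_r\ge1$, $f[\mu_0^{(\beta_0)},\dots,\mu_m^{(\beta_m)}]:=f^{[N-1]}$ evaluated at the list in which $\mu_r$ is repeated $\beta_r$ times. *)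

theory Defs
  imports "HOL-Analysis.Analysis"
begin

text \<open>Divided differences f^{[k]} evaluated at a list of k+1 points (list of length k+1).
  The empty list case is an irrelevant default.\<close>
fun dd :: "(real \<Rightarrow> real) \<Rightarrow> real list \<Rightarrow> real" where
  "dd f [] = 0"
| "dd f [x] = f x"
| "dd f (x0 # x1 # xs) =
     (if x0 \<noteq> x1 then (dd f (x0 # xs) - dd f (x1 # xs)) / (x0 - x1)
      else deriv (\<lambda>\<mu>. dd f (\<mu> # xs)) x0)"

text \<open>f[mu_0^(beta_0), ..., mu_m^(beta_m)] given as a list of pairs (mu_r, beta_r).\<close>
definition ddm :: "(real \<Rightarrow> real) \<Rightarrow> (real \<times> nat) list \<Rightarrow> real" where
  "ddm f ps = dd f (concat (map (\<lambda>(\<mu>, \<beta>). replicate \<beta> \<mu>) ps))"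

definition Cn :: "nat \<Rightarrow> (real \<Rightarrow> real) \<Rightarrow> bool" where
  "Cn n f \<longleftrightarrow> (\<forall>k<n. \<forall>x. (deriv ^^ k) f differentiable (at x))
                 \<and> continuous_on UNIV ((deriv ^^ n) f)"

definition pcoef :: "nat \<Rightarrow> nat \<Rightarrow> real \<Rightarrow> real" where
  "pcoef a l x = real ((a + l - 1) choose l) * x ^ a * (1 - x) ^ l"

end

theory Submission
  imports Defs
begin


definition hq :: "real \<Rightarrow> (real \<Rightarrow> real) \<Rightarrow> real \<Rightarrow> real" where
  "hq b h \<mu> = (if \<mu> \<noteq> b then (h \<mu> - h b) / (\<mu> - b) else deriv h b)"

lemma Cn_deriv:
  assumes "Cn (Suc k) h" "p \<le> k"
  shows "((deriv ^^ p) h has_real_derivative (deriv ^^ Suc p) h x) (at x)"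
  using assms unfolding Cn_def
  by (simp add: DERIV_deriv_iff_real_differentiable)

lemma Cn_cont:
  assumes "Cn k h" "p \<le> k"
  shows "continuous_on UNIV ((deriv ^^ p) h)"
proof (cases "p = k")
  case True then show ?thesis using assms by (simp add: Cn_def)
next
  case False
  then have "\<forall>x. (deriv ^^ p) h differentiable (at x)" using assms by (simp add: Cn_def)
  then show ?thesis
    by (meson continuous_at_imp_continuous_on differentiable_imp_continuous_within)
qed

lemma hq_integral:
  assumes d: "\<And>x. (h has_real_derivative h' x) (at x)" and c: "continuous_on UNIV h'"
  shows "hq b h \<mu> = integral (cbox 0 1) (\<lambda>t. t ^ 0 * h' (b + t * (\<mu> - b)))"
proof (cases "\<mu> = b")
  case True
  then show ?thesis using d by (simp add: hq_def DERIV_imp_deriv)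
next
  case False
  have "((\<lambda>t. h' (b + t * (\<mu> - b)) * (\<mu> - b)) has_integral
         h (b + 1 * (\<mu> - b)) - h (b + 0 * (\<mu> - b))) {0..1}"
  proof (rule fundamental_theorem_of_calculus)
    fix t :: real
    have "((\<lambda>t. h (b + t * (\<mu> - b))) has_real_derivative h' (b + t * (\<mu> - b)) * (\<mu> - b)) (at t)"
      by (rule DERIV_chain2[OF d]) (auto intro!: derivative_eq_intros)
    then show "((\<lambda>t. h (b + t * (\<mu> - b))) has_vector_derivative h' (b + t * (\<mu> - b)) * (\<mu> - b)) (at t within {0..1})"
      by (simp add: has_real_derivative_iff_has_vector_derivative has_vector_derivative_at_within)
  qed simp
  then have "integral {0..1} (\<lambda>t. h' (b + t * (\<mu> - b)) * (\<mu> - b)) = h (b + 1 * (\<mu> - b)) - h (b + 0 * (\<mu> - b))"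
    by (rule integral_unique)
  moreover have "integral {0..1} (\<lambda>t. h' (b + t * (\<mu> - b)) * (\<mu> - b))
     = integral {0..1} (\<lambda>t. h' (b + t * (\<mu> - b))) * (\<mu> - b)"
    by (rule integral_mult_left)
  ultimately show ?thesis using False by (simp add: hq_def field_simps)
qed


definition Ik :: "(real \<Rightarrow> real) \<Rightarrow> real \<Rightarrow> nat \<Rightarrow> real \<Rightarrow> real" where
  "Ik h b p \<mu> = integral (cbox 0 1) (\<lambda>t. t ^ p * (deriv ^^ Suc p) h (b + t * (\<mu> - b)))"

lemma Ik_deriv:
  assumes C: "Cn (Suc k) h" and pk: "p < k"
  shows "(Ik h b p has_real_derivative Ik h b (Suc p) \<mu>) (at \<mu>)"
proof -
  let ?\<phi> = "(deriv ^^ Suc p) h" and ?\<phi>' = "(deriv ^^ Suc (Suc p)) h"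
  have d: "\<And>y. (?\<phi> has_real_derivative ?\<phi>' y) (at y)"
    using Cn_deriv[OF C, of "Suc p"] pk by simp
  have c: "continuous_on UNIV ?\<phi>" using Cn_cont[OF C, of "Suc p"] pk by simp
  have c': "continuous_on UNIV ?\<phi>'" using Cn_cont[OF C, of "Suc (Suc p)"] pk by simp
  have "((\<lambda>x. integral (cbox 0 1) (\<lambda>t. t ^ p * ?\<phi> (b + t * (x - b)))) has_field_derivative
        integral (cbox 0 1) (\<lambda>t. t ^ p * (?\<phi>' (b + t * (\<mu> - b)) * t))) (at \<mu> within UNIV)"
  proof (rule leibniz_rule_field_derivative)
    fix x t :: real
    have 1: "((\<lambda>x. ?\<phi> (b + t * (x - b))) has_real_derivative ?\<phi>' (b + t * (x - b)) * t) (at x)"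
      by (rule DERIV_chain2[OF d]) (auto intro!: derivative_eq_intros)
    show "((\<lambda>x. t ^ p * ?\<phi> (b + t * (x - b))) has_real_derivative t ^ p * (?\<phi>' (b + t * (x - b)) * t)) (at x within UNIV)"
      by (rule DERIV_cmult[OF 1])
  next
    fix x :: real
    show "(\<lambda>t. t ^ p * ?\<phi> (b + t * (x - b))) integrable_on cbox 0 1"
      by (rule integrable_continuous) (auto intro!: continuous_intros continuous_on_compose2[OF c[simplified]])
  next
    show "continuous_on (UNIV \<times> cbox 0 1) (\<lambda>(x, t). t ^ p * (?\<phi>' (b + t * (x - b)) * t))"
      by (auto simp: split_beta intro!: continuous_intros continuous_on_compose2[OF c'[simplified]])
  qed auto
  moreover have "integral (cbox 0 1) (\<lambda>t. t ^ p * (?\<phi>' (b + t * (\<mu> - b)) * t)) = Ik h b (Suc p) \<mu>"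
    unfolding Ik_def by (rule integral_cong) (simp add: mult_ac)
  ultimately show ?thesis by (simp add: Ik_def[abs_def])
qed

lemma Ik_eq:
  assumes C: "Cn (Suc k) h"
  shows "p \<le> k \<Longrightarrow> (deriv ^^ p) (hq b h) = Ik h b p"
proof (induction p)
  case 0
  have d: "\<And>y. (h has_real_derivative (deriv ^^ Suc 0) h y) (at y)"
    using Cn_deriv[OF C, of 0] by simp
  have c: "continuous_on UNIV ((deriv ^^ Suc 0) h)" using Cn_cont[OF C, of "Suc 0"] by simp
  show ?case using hq_integral[OF d c] by (simp add: Ik_def fun_eq_iff)
next
  case (Suc p)
  then have e: "(deriv ^^ p) (hq b h) = Ik h b p" by simp
  show ?case
  proof
    fix x
    show "(deriv ^^ Suc p) (hq b h) x = Ik h b (Suc p) x"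
      using DERIV_imp_deriv[OF Ik_deriv[OF C, of p b x]] Suc.prems e by simp
  qed
qed

lemma Cn_hq:
  assumes C: "Cn (Suc k) h"
  shows "Cn k (hq b h)"
  unfolding Cn_def
proof (intro conjI allI impI)
  fix p x assume "p < k"
  then show "(deriv ^^ p) (hq b h) differentiable at x"
    using Ik_eq[OF C, of p b] Ik_deriv[OF C, of p b x]
    by (auto simp: real_differentiable_def)
next
  have c: "continuous_on UNIV ((deriv ^^ Suc k) h)" using Cn_cont[OF C, of "Suc k"] by simp
  have "continuous_on UNIV (\<lambda>x. integral (cbox 0 1) (\<lambda>t. t ^ k * (deriv ^^ Suc k) h (b + t * (x - b))))"
    by (rule integral_continuous_on_param)
      (auto simp: split_beta intro!: continuous_intros continuous_on_compose2[OF c[simplified]])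
  then show "continuous_on UNIV ((deriv ^^ k) (hq b h))"
    using Ik_eq[OF C, of k b] by (simp add: Ik_def[abs_def])
qed


lemma Cn_g:
  assumes C: "Cn n f"
  shows "length M \<le> n \<Longrightarrow> Cn (n - length M) (\<lambda>\<mu>. dd f (\<mu> # M))"
proof (induction M)
  case Nil
  have "(\<lambda>\<mu>. dd f [\<mu>]) = f" by (simp add: fun_eq_iff)
  then show ?case using C by simp
next
  case (Cons b M)
  moreover have "Suc (n - length (b # M)) = n - length M" using Cons.prems by simp
  ultimately have "Cn (Suc (n - length (b # M))) (\<lambda>\<mu>. dd f (\<mu> # M))"
    by simp
  from Cn_hq[OF this, of b]
  have "Cn (n - length (b # M)) (hq b (\<lambda>\<mu>. dd f (\<mu> # M)))" .
  moreover have "hq b (\<lambda>\<mu>. dd f (\<mu> # M)) = (\<lambda>\<mu>. dd f (\<mu> # b # M))"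
    by (simp add: fun_eq_iff hq_def)
  ultimately show ?case by simp
qed

lemma dd_diff:
  assumes C: "Cn n f" and l: "length K < n"
  shows "(\<lambda>\<mu>. dd f (\<mu> # K)) differentiable at x"
proof -
  obtain m where m: "n - length K = Suc m" using l by (metis Suc_diff_Suc)
  have "Cn (Suc m) (\<lambda>\<mu>. dd f (\<mu> # K))" using Cn_g[OF C, of K] l m by simp
  then show ?thesis unfolding Cn_def by (metis funpow_0 zero_less_Suc)
qed

lemma swap01: "dd f (a # b # L) = dd f (b # a # L)"
proof (cases "a = b")
  case True then show ?thesis by simp
next
  case False
  then have "b \<noteq> a" by auto
  with False show ?thesis by (simp add: field_split_simps)
qed

lemma aux_swap:
  assumes ac: "a \<noteq> c" and d: "(\<lambda>\<mu>. dd f (\<mu> # K)) differentiable at a"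
  shows "dd f (a # a # c # K) = dd f (a # c # a # K)"
proof -
  let ?g = "\<lambda>\<mu>. dd f (\<mu> # K)"
  have dg: "(?g has_real_derivative deriv ?g a) (at a)"
    using d by (simp add: DERIV_deriv_iff_real_differentiable)
  have q: "((\<lambda>\<mu>. (?g \<mu> - ?g c) / (\<mu> - c)) has_real_derivative
          (deriv ?g a * (a - c) - (?g a - ?g c) * 1) / ((a - c) * (a - c))) (at a)"
    using ac by (auto intro!: derivative_eq_intros dg)
  have q2: "((\<lambda>\<mu>. dd f (\<mu> # c # K)) has_real_derivative
          (deriv ?g a * (a - c) - (?g a - ?g c) * 1) / ((a - c) * (a - c))) (at a)"
    by (rule has_field_derivative_transform_within_open[OF q, of "- {c}"]) (use ac in auto)
  have "dd f (a # a # c # K) = deriv (\<lambda>\<mu>. dd f (\<mu> # c # K)) a" by simp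
  also have "\<dots> = (deriv ?g a * (a - c) - (?g a - ?g c) * 1) / ((a - c) * (a - c))"
    by (rule DERIV_imp_deriv[OF q2])
  also have "\<dots> = dd f (a # c # a # K)"
    using ac by (simp add: field_split_simps)
  finally show ?thesis .
qed

lemma swap12:
  assumes d: "\<And>x. (\<lambda>\<mu>. dd f (\<mu> # K)) differentiable at x"
  shows "dd f (a # b # c # K) = dd f (a # c # b # K)"
proof -
  consider "b = c" | "a = b" "a \<noteq> c" | "a = c" "a \<noteq> b" | "a \<noteq> b" "a \<noteq> c" "b \<noteq> c"
    by blast
  then show ?thesis
  proof cases
    case 1 then show ?thesis by simp
  next
    case 2 then show ?thesis using aux_swap[of a c f K] d by simp
  next
    case 3 then show ?thesis using aux_swap[of a b f K] d by simp
  next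
    case 4
    then have "b \<noteq> a" "c \<noteq> a" "c \<noteq> b" by auto
    with 4 show ?thesis by (simp add: field_split_simps)
  qed
qed


declare dd.simps(3)[simp del]

lemma mset_ex_rest:
  assumes "mset (b # M1) = mset (b' # M2)" "b \<noteq> b'"
  shows "\<exists>K. mset M1 = mset (b' # K) \<and> mset M2 = mset (b # K)"
proof -
  have "b' \<in># mset M1" using mset_eq_setD[OF assms(1)] assms(2) by auto
  then have e: "mset M1 = add_mset b' (mset M1 - {#b'#})" by (rule insert_DiffM[symmetric])
  have "add_mset b' (mset M2) = add_mset b (mset M1)" using assms(1) by simp
  also have "\<dots> = add_mset b (add_mset b' (mset M1 - {#b'#}))" using e by simp
  also have "\<dots> = add_mset b' (add_mset b (mset M1 - {#b'#}))" by (rule add_mset_commute)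
  finally have "mset M2 = add_mset b (mset M1 - {#b'#})" by simp
  then have "mset M2 = mset (b # remove1 b' M1)" by (simp add: mset_remove1)
  moreover have "mset M1 = mset (b' # remove1 b' M1)" using e by (simp add: mset_remove1)
  ultimately show ?thesis by blast
qed

lemma perm_step:
  fixes L L' :: "real list" and f :: "real \<Rightarrow> real"
  assumes IH: "\<And>L L'. length L < N \<Longrightarrow> mset L = mset L' \<Longrightarrow> dd f L = dd f L'"
    and diff: "\<And>K x. length K + 3 \<le> N \<Longrightarrow> (\<lambda>\<mu>. dd f (\<mu> # K)) differentiable at x"
    and len: "length L = N" and m: "mset L = mset L'"
  shows "dd f L = dd f L'"
proof -
  have B: "dd f (a # b # P) = dd f (a # b # Q)"
    if "length P + 2 = N" "mset P = mset Q" for a b P Q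
  proof -
    have e: "dd f (\<mu> # P) = dd f (\<mu> # Q)" for \<mu> using IH[of "\<mu> # P" "\<mu> # Q"] that by simp
    show ?thesis by (simp add: e dd.simps(3))
  qed
  have A: "dd f (a # M) = dd f (a # M')"
    if l: "length M + 1 = N" and mm: "mset M = mset M'" for a M M'
  proof (cases M)
    case Nil then show ?thesis using mm by simp
  next
    case (Cons b M1)
    then obtain b' M1' where M': "M' = b' # M1'" using mm by (cases M') auto
    show ?thesis
    proof (cases "b = b'")
      case True then show ?thesis using B[where a="a" and b="b" and P="M1" and Q="M1'"] mm l Cons M' by simp
    next
      case False
      obtain K where K1: "mset M1 = mset (b' # K)" and K2: "mset M1' = mset (b # K)"
        using mset_ex_rest[OF _ False, of M1 M1'] mm Cons M' by auto
      have lK: "length K + 3 = N" using mset_eq_length[OF K1] l Cons by simp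
      have "dd f (a # M) = dd f (a # b # b' # K)" using B[where a="a" and b="b" and P="M1" and Q="b' # K"] K1 l Cons by (simp add: mset_eq_length)
      also have "\<dots> = dd f (a # b' # b # K)" by (rule swap12) (use diff lK in auto)
      also have "\<dots> = dd f (a # M')" using B[where a="a" and b="b'" and P="b # K" and Q="M1'"] K2 lK M' by simp
      finally show ?thesis .
    qed
  qed
  show ?thesis
  proof (cases L)
    case Nil then show ?thesis using m by simp
  next
    case (Cons a M)
    then obtain a' M' where L': "L' = a' # M'" using m by (cases L') auto
    show ?thesis
    proof (cases "a = a'")
      case True then show ?thesis using A[where a="a" and M="M" and M'="M'"] m len Cons L' by simp
    next
      case False
      obtain K where K1: "mset M = mset (a' # K)" and K2: "mset M' = mset (a # K)"
        using mset_ex_rest[OF _ False, of M M'] m Cons L' by auto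
      have lK: "length K + 2 = N" using mset_eq_length[OF K1] len Cons by simp
      have "dd f L = dd f (a # a' # K)" using A[where a="a" and M="M" and M'="a' # K"] K1 len Cons by simp
      also have "\<dots> = dd f (a' # a # K)" by (rule swap01)
      also have "\<dots> = dd f L'" using A[where a="a'" and M="a # K" and M'="M'"] K2 lK L' by simp
      finally show ?thesis .
    qed
  qed
qed

lemma dd_perm_aux:
  fixes f :: "real \<Rightarrow> real"
  assumes C: "Cn n f"
  shows "N \<le> n + 1 \<Longrightarrow> \<forall>L L'. length L = N \<longrightarrow> mset L = mset L' \<longrightarrow> dd f L = dd f L'"
proof (induction N rule: less_induct)
  case (less N)
  show ?case
  proof (intro allI impI)
    fix L L' :: "real list" assume l: "length L = N" and m: "mset L = mset L'"
    show "dd f L = dd f L'"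
    proof (rule perm_step[OF _ _ l m])
      fix L1 L1' :: "real list" assume a: "length L1 < N" "mset L1 = mset L1'"
      have "length L1 \<le> n + 1" using a less.prems by simp
      then show "dd f L1 = dd f L1'" using less.IH[OF a(1)] a by blast
    next
      fix K :: "real list" and x :: real assume "length K + 3 \<le> N"
      then show "(\<lambda>\<mu>. dd f (\<mu> # K)) differentiable at x"
        using dd_diff[OF C, of K] less.prems by simp
    qed
  qed
qed

lemma dd_perm:
  fixes L L' :: "real list"
  assumes C: "Cn n f" and "length L \<le> n + 1" and "mset L = mset L'"
  shows "dd f L = dd f L'"
  using dd_perm_aux[OF C assms(2)] assms(3) by blast

lemma dd_rec:
  assumes C: "Cn n f" and xy: "x \<noteq> y" and l: "length L \<le> n + 1"
    and m: "mset L = mset (x # y # M)" and m1: "mset L1 = mset (x # M)" and m2: "mset L2 = mset (y # M)"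
  shows "(x - y) * dd f L = dd f L1 - dd f L2"
proof -
  have lm: "length (x # y # M) \<le> n + 1" using l m by (metis mset_eq_length)
  have "dd f L = dd f (x # y # M)" by (rule dd_perm[OF C l m])
  moreover have "dd f L1 = dd f (x # M)" by (rule dd_perm[OF C _ m1]) (use lm m1 mset_eq_length in fastforce)
  moreover have "dd f L2 = dd f (y # M)" by (rule dd_perm[OF C _ m2]) (use lm m2 mset_eq_length in fastforce)
  ultimately show ?thesis using xy by (simp add: dd.simps(3))
qed


lemma pcoef_pascal:
  "pcoef (Suc b) (Suc l) x = (1 - x) * pcoef (Suc b) l x + x * pcoef b (Suc l) x"
  by (simp add: pcoef_def algebra_simps)

lemma pascal_sum:
  fixes U :: "nat \<Rightarrow> real"
  assumes "1 \<le> a" "1 \<le> b"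
  shows "(\<Sum>l<a. pcoef b l x * U l)
       = (1 - x) * (\<Sum>l<a - 1. pcoef b l x * U (Suc l)) + x * (\<Sum>l<a. pcoef (b - 1) l x * U l)"
proof -
  obtain a' b' where a: "a = Suc a'" and b: "b = Suc b'" using assms by (metis Suc_pred' less_eq_Suc_le One_nat_def)
  have p0: "pcoef (Suc b') 0 x = x * pcoef b' 0 x" by (simp add: pcoef_def)
  have "(\<Sum>l<Suc a'. pcoef (Suc b') l x * U l)
     = pcoef (Suc b') 0 x * U 0 + (\<Sum>l<a'. pcoef (Suc b') (Suc l) x * U (Suc l))"
    by (rule sum.lessThan_Suc_shift)
  also have "\<dots> = x * (pcoef b' 0 x * U 0) + ((1 - x) * (\<Sum>l<a'. pcoef (Suc b') l x * U (Suc l))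
       + x * (\<Sum>l<a'. pcoef b' (Suc l) x * U (Suc l)))"
    by (simp only: pcoef_pascal p0 sum_distrib_left sum.distrib[symmetric] distrib_right mult.assoc)
  also have "(\<Sum>l<Suc a'. pcoef b' l x * U l) = pcoef b' 0 x * U 0 + (\<Sum>l<a'. pcoef b' (Suc l) x * U (Suc l))"
    by (rule sum.lessThan_Suc_shift)
  ultimately show ?thesis unfolding a b by (simp add: algebra_simps)
qed


lemma pcoef0_sum:
  fixes W :: "nat \<Rightarrow> real"
  assumes "1 \<le> b"
  shows "(\<Sum>l<b. pcoef 0 l x * W l) = W 0"
proof -
  obtain b' where b: "b = Suc b'" using assms by (cases b) auto
  have "(\<Sum>l<Suc b'. pcoef 0 l x * W l) = pcoef 0 0 x * W 0 + (\<Sum>l<b'. pcoef 0 (Suc l) x * W (Suc l))"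
    by (rule sum.lessThan_Suc_shift)
  moreover have z: "\<And>l. pcoef 0 (Suc l) x = 0" by (simp add: pcoef_def binomial_eq_0)
  moreover have o: "pcoef 0 0 x = 1" by (simp add: pcoef_def)
  ultimately show ?thesis unfolding b by (simp only: z o) simp
qed

lemma comb:
  fixes G :: "nat \<Rightarrow> nat \<Rightarrow> nat \<Rightarrow> real"
  assumes st: "t = 1 - s"
    and step: "\<And>a b c. 1 \<le> a \<Longrightarrow> 1 \<le> b \<Longrightarrow> a + b + c \<le> T \<Longrightarrow>
                 G a b c = t * G (a - 1) b (c + 1) + s * G a (b - 1) (c + 1)"
  shows "1 \<le> a + b \<Longrightarrow> a + b + c \<le> T \<Longrightarrow>
    G a b c = (\<Sum>l<a. pcoef b l s * G (a - l) 0 (c + b + l))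
            + (\<Sum>l<b. pcoef a l t * G 0 (b - l) (c + a + l))"
proof (induction "a + b" arbitrary: a b c rule: less_induct)
  case less
  consider "a = 0" | "b = 0" | "1 \<le> a" "1 \<le> b" by linarith
  then show ?case
  proof cases
    case 1
    then show ?thesis using pcoef0_sum[of b t "\<lambda>l. G 0 (b - l) (c + l)"] less.prems by simp
  next
    case 2
    then show ?thesis using pcoef0_sum[of a s "\<lambda>l. G (a - l) 0 (c + l)"] less.prems by simp
  next
    case 3
    obtain a' b' where a: "a = Suc a'" and b: "b = Suc b'" using 3 by (metis Suc_pred' less_eq_Suc_le One_nat_def)
    have IH1: "G a' (Suc b') (Suc c) = (\<Sum>l<a'. pcoef (Suc b') l s * G (a' - l) 0 (Suc c + Suc b' + l))
            + (\<Sum>l<Suc b'. pcoef a' l t * G 0 (Suc b' - l) (Suc c + a' + l))"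
      using less.hyps[of a' "Suc b'" "Suc c"] less.prems a b by simp
    have IH2: "G (Suc a') b' (Suc c) = (\<Sum>l<Suc a'. pcoef b' l s * G (Suc a' - l) 0 (Suc c + b' + l))
            + (\<Sum>l<b'. pcoef (Suc a') l t * G 0 (b' - l) (Suc c + Suc a' + l))"
      using less.hyps[of "Suc a'" b' "Suc c"] less.prems a b by simp
    have S: "G (Suc a') (Suc b') c = t * G a' (Suc b') (Suc c) + s * G (Suc a') b' (Suc c)"
      using step[of "Suc a'" "Suc b'" c] less.prems a b by simp
    have PU: "(\<Sum>l<Suc a'. pcoef (Suc b') l s * G (Suc a' - l) 0 (c + Suc b' + l))
      = t * (\<Sum>l<a'. pcoef (Suc b') l s * G (a' - l) 0 (Suc c + Suc b' + l))
      + s * (\<Sum>l<Suc a'. pcoef b' l s * G (Suc a' - l) 0 (Suc c + b' + l))"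
      using pascal_sum[of "Suc a'" "Suc b'" s "\<lambda>l. G (Suc a' - l) 0 (c + Suc b' + l)"] st by simp
    have PV: "(\<Sum>l<Suc b'. pcoef (Suc a') l t * G 0 (Suc b' - l) (c + Suc a' + l))
      = s * (\<Sum>l<b'. pcoef (Suc a') l t * G 0 (b' - l) (Suc c + Suc a' + l))
      + t * (\<Sum>l<Suc b'. pcoef a' l t * G 0 (Suc b' - l) (Suc c + a' + l))"
      using pascal_sum[of "Suc b'" "Suc a'" t "\<lambda>l. G 0 (Suc b' - l) (c + Suc a' + l)"] st by simp
    show ?thesis unfolding a b using S IH1 IH2 PU PV by (simp add: algebra_simps)
  qed
qed


lemma G_step:
  fixes f :: "real \<Rightarrow> real" and x y z :: real and R :: "real list"
  assumes C: "Cn n f" and d: "x \<noteq> y" "x \<noteq> z" "z \<noteq> y"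
    and ab: "1 \<le> a" "1 \<le> b" and l: "a + b + c + length R \<le> n + 1"
  shows "dd f (replicate a x @ replicate c z @ replicate b y @ R)
    = ((z - y) / (x - y)) * dd f (replicate (a - 1) x @ replicate (c + 1) z @ replicate b y @ R)
    + ((x - z) / (x - y)) * dd f (replicate a x @ replicate (c + 1) z @ replicate (b - 1) y @ R)"
proof -
  obtain a' b' where a: "a = Suc a'" and b: "b = Suc b'" using ab by (metis Suc_pred' less_eq_Suc_le One_nat_def)
  define G where "G = (\<lambda>a b c. dd f (replicate a x @ replicate c z @ replicate b y @ R))"
  define M where "M = replicate a' x @ replicate c z @ replicate b' y @ R"
  have r1: "(x - y) * G (Suc a') (Suc b') c = G (Suc a') b' c - G a' (Suc b') c"
    unfolding G_def
    by (rule dd_rec[OF C d(1), of _ M]) (use l a b in \<open>auto simp: M_def add_mset_commute\<close>)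
  have r2: "(z - y) * G a' (Suc b') (Suc c) = G a' b' (Suc c) - G a' (Suc b') c"
    unfolding G_def
    by (rule dd_rec[OF C d(3), of _ M]) (use l a b in \<open>auto simp: M_def add_mset_commute\<close>)
  have r3: "(x - z) * G (Suc a') b' (Suc c) = G (Suc a') b' c - G a' b' (Suc c)"
    unfolding G_def
    by (rule dd_rec[OF C d(2), of _ M]) (use l a b in \<open>auto simp: M_def add_mset_commute\<close>)
  have E: "(x - y) * G (Suc a') (Suc b') c = (z - y) * G a' (Suc b') (Suc c) + (x - z) * G (Suc a') b' (Suc c)"
    using r1 r2 r3 by linarith
  have "G (Suc a') (Suc b') c = ((z - y) * G a' (Suc b') (Suc c) + (x - z) * G (Suc a') b' (Suc c)) / (x - y)"
    using E d(1) by (simp add: eq_divide_eq mult.commute)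
  also have "\<dots> = ((z - y) / (x - y)) * G a' (Suc b') (Suc c) + ((x - z) / (x - y)) * G (Suc a') b' (Suc c)"
    by (simp add: add_divide_distrib)
  finally have "G (Suc a') (Suc b') c = ((z - y) / (x - y)) * G a' (Suc b') (Suc c) + ((x - z) / (x - y)) * G (Suc a') b' (Suc c)" .
  then show ?thesis unfolding G_def a b by simp
qed


lemma len_concat_rest:
  "length (concat (map (\<lambda>(\<mu>, \<beta>). replicate \<beta> \<mu>) (map (\<lambda>m. (lam m, \<alpha> m)) xs))) = sum_list (map \<alpha> xs)"
  by (induction xs) auto

lemma main_identity:
  fixes f :: "real \<Rightarrow> real" and x y z :: real and R :: "real list"
  assumes C: "Cn n f" and xy: "x \<noteq> y" and ab: "1 \<le> a" "1 \<le> b"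
    and l: "a + b + c + length R \<le> n + 1"
  shows "dd f (replicate a x @ replicate c z @ replicate b y @ R)
    = (\<Sum>l<a. pcoef b l ((x - z) / (x - y)) * dd f (replicate (a - l) x @ replicate (c + b + l) z @ replicate 0 y @ R))
    + (\<Sum>l<b. pcoef a l ((z - y) / (x - y)) * dd f (replicate 0 x @ replicate (c + a + l) z @ replicate (b - l) y @ R))"
proof -
  obtain a' b' where a: "a = Suc a'" and b: "b = Suc b'" using ab by (metis Suc_pred' less_eq_Suc_le One_nat_def)
  consider "z = x" | "z = y" | "z \<noteq> x" "z \<noteq> y" by blast
  then show ?thesis
  proof cases
    case 1
    have s0: "\<And>l. pcoef b l ((x - z) / (x - y)) = 0" using 1 b by (simp add: pcoef_def)
    have t1: "(z - y) / (x - y) = 1" using 1 xy by simp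
    have z1: "\<And>l. pcoef a (Suc l) 1 = 0" by (simp add: pcoef_def)
    have o1: "pcoef a 0 1 = 1" by (simp add: pcoef_def)
    have r: "replicate (c + a) x = replicate a x @ replicate c x"
      by (simp add: replicate_add[symmetric] add.commute)
    show ?thesis unfolding s0 t1 b
      by (simp only: sum.lessThan_Suc_shift z1 o1) (simp add: 1 r pcoef_def)
  next
    case 2
    have t0: "\<And>l. pcoef a l ((z - y) / (x - y)) = 0" using 2 a by (simp add: pcoef_def)
    have s1: "(x - z) / (x - y) = 1" using 2 xy by simp
    have z1: "\<And>l. pcoef b (Suc l) 1 = 0" by (simp add: pcoef_def)
    have o1: "pcoef b 0 1 = 1" by (simp add: pcoef_def)
    have r: "replicate (c + b) y = replicate c y @ replicate b y"
      by (simp add: replicate_add[symmetric])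
    show ?thesis unfolding t0 s1 a
      by (simp only: sum.lessThan_Suc_shift z1 o1) (simp add: 2 r pcoef_def)
  next
    case 3
    define G where "G = (\<lambda>a b c. dd f (replicate a x @ replicate c z @ replicate b y @ R))"
    have "G a b c = (\<Sum>l<a. pcoef b l ((x - z) / (x - y)) * G (a - l) 0 (c + b + l))
            + (\<Sum>l<b. pcoef a l ((z - y) / (x - y)) * G 0 (b - l) (c + a + l))"
    proof (rule comb[where T = "a + b + c"])
      show "(z - y) / (x - y) = 1 - (x - z) / (x - y)" using xy by (simp add: field_simps)
    next
      fix p q r :: nat assume pq: "1 \<le> p" "1 \<le> q" "p + q + r \<le> a + b + c"
      show "G p q r = (z - y) / (x - y) * G (p - 1) q (r + 1) + (x - z) / (x - y) * G p (q - 1) (r + 1)"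
        unfolding G_def by (rule G_step[OF C xy _ _ pq(1,2)]) (use 3 pq(3) l in auto)
    qed (use ab in auto)
    then show ?thesis unfolding G_def .
  qed
qed

theorem corollary3p2:
  fixes f :: "real \<Rightarrow> real" and n \<kappa> :: nat
    and lam :: "nat \<Rightarrow> real" and \<alpha> :: "nat \<Rightarrow> nat" and i j k :: nat
  assumes "n \<ge> 2" and "Cn n f"
    and "2 \<le> \<kappa>" and "\<kappa> \<le> n"
    and "(\<Sum>m\<le>\<kappa>. \<alpha> m) \<le> n + 1"
    and "i \<le> \<kappa>" and "j \<le> \<kappa>" and "i \<noteq> j"
    and "lam i \<noteq> lam j" and "\<alpha> i > 0" and "\<alpha> j > 0"
    and "k \<le> \<kappa>" and "k \<noteq> i" and "k \<noteq> j"
  shows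
    "let rest = map (\<lambda>m. (lam m, \<alpha> m)) (filter (\<lambda>m. m \<notin> {i, j, k}) [0..<Suc \<kappa>])
     in ddm f ([(lam i, \<alpha> i), (lam k, \<alpha> k), (lam j, \<alpha> j)] @ rest)
      = (\<Sum>l<\<alpha> i. pcoef (\<alpha> j) l ((lam i - lam k) / (lam i - lam j))
            * ddm f ([(lam i, \<alpha> i - l), (lam k, \<alpha> k + \<alpha> j + l)] @ rest))
      + (\<Sum>l<\<alpha> j. pcoef (\<alpha> i) l ((lam k - lam j) / (lam i - lam j))
            * ddm f ([(lam k, \<alpha> k + \<alpha> i + l), (lam j, \<alpha> j - l)] @ rest))"
proof -
  define P where "P = (\<lambda>m. m \<notin> {i, j, k})"
  define rest where "rest = map (\<lambda>m. (lam m, \<alpha> m)) (filter P [0..<Suc \<kappa>])"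
  define R where "R = concat (map (\<lambda>(\<mu>, \<beta>). replicate \<beta> \<mu>) rest)"
  have lenR: "length R = sum_list (map \<alpha> (filter P [0..<Suc \<kappa>]))"
    unfolding R_def rest_def by (rule len_concat_rest)
  have "sum_list (map \<alpha> (filter P [0..<Suc \<kappa>])) = sum \<alpha> (set (filter P [0..<Suc \<kappa>]))"
    by (rule sum_list_distinct_conv_sum_set) simp
  also have "set (filter P [0..<Suc \<kappa>]) = {..\<kappa>} - {i, j, k}" by (auto simp: P_def)
  finally have s1: "length R = sum \<alpha> ({..\<kappa>} - {i, j, k})" using lenR by simp
  have "(\<Sum>m\<le>\<kappa>. \<alpha> m) = sum \<alpha> ({..\<kappa>} - {i, j, k}) + sum \<alpha> {i, j, k}"
    by (rule sum.subset_diff) (use assms in auto)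
  also have "sum \<alpha> {i, j, k} = \<alpha> i + \<alpha> j + \<alpha> k" using assms by simp
  finally have L: "\<alpha> i + \<alpha> j + \<alpha> k + length R \<le> n + 1" using s1 assms(5) by simp
  have D3: "\<And>a c b. ddm f ([(lam i, a), (lam k, c), (lam j, b)] @ rest)
      = dd f (replicate a (lam i) @ replicate c (lam k) @ replicate b (lam j) @ R)"
    by (simp add: ddm_def R_def)
  have D2a: "\<And>a c. ddm f ([(lam i, a), (lam k, c)] @ rest)
      = dd f (replicate a (lam i) @ replicate c (lam k) @ replicate 0 (lam j) @ R)"
    by (simp add: ddm_def R_def)
  have D2b: "\<And>c b. ddm f ([(lam k, c), (lam j, b)] @ rest)
      = dd f (replicate 0 (lam i) @ replicate c (lam k) @ replicate b (lam j) @ R)"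
    by (simp add: ddm_def R_def)
  have M: "dd f (replicate (\<alpha> i) (lam i) @ replicate (\<alpha> k) (lam k) @ replicate (\<alpha> j) (lam j) @ R)
    = (\<Sum>l<\<alpha> i. pcoef (\<alpha> j) l ((lam i - lam k) / (lam i - lam j)) * dd f (replicate (\<alpha> i - l) (lam i) @ replicate (\<alpha> k + \<alpha> j + l) (lam k) @ replicate 0 (lam j) @ R))
    + (\<Sum>l<\<alpha> j. pcoef (\<alpha> i) l ((lam k - lam j) / (lam i - lam j)) * dd f (replicate 0 (lam i) @ replicate (\<alpha> k + \<alpha> i + l) (lam k) @ replicate (\<alpha> j - l) (lam j) @ R))"
    by (rule main_identity[OF assms(2) assms(9)]) (use assms L in auto)
  show ?thesis
    unfolding Let_def P_def[symmetric] rest_def[symmetric] D3 D2a D2b by (rule M)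
qed

end
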